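(* Let $\Omega\subset\mathbb{C}^n$ be an open connected subset and $f_m\colon\Omega\to\mathbb{C}^n$ ($m\in\mathbb{N}$) holomorphic maps converging locally uniformly to $\mathrm{id}|_\Omega$. Let $D>0$ be an integer and $\Omega'\subset\Omega$ a non-empty open relatively compact subset such that $(f_m)^i(\overline{\Omega'})\subseteq\Omega$ for $i=1,\dots,D$ and all $m$, and $(f_m)^D=\mathrm{id}$ on $\Omega'$ for all $m$. Let, for $m\gg0$, $B_m\subset\Omega'$ be a non-empty compact convex subset with $f_m(B_m)=B_m$. Then for every $m\gg0$ there is a fixed point $P_m=f_m(P_m)\in B_m$ of $f_m$, and these satisfy $Df_m(P_m)=\mathrm{id}$ for $m\gg0$.
   Context: $Df_m(P)$ denotes the complex derivative (Jacobian matrix) of $f_m$ at $P$. *)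

theory Defs
  imports "HOL-Analysis.Analysis"
begin

text \<open>Holomorphic maps between open subsets of complex n-space: at every point the
  (real) Frechet derivative exists and is complex-linear, i.e. given by a complex
  n x n matrix (the complex Jacobian).\<close>
definition holomorphic_on_n ::
  "(complex ^ 'n \<Rightarrow> complex ^ 'm) \<Rightarrow> (complex ^ 'n) set \<Rightarrow> bool" where
  "holomorphic_on_n f S \<longleftrightarrow>
     (\<forall>z\<in>S. \<exists>A :: complex ^ 'n ^ 'm. (f has_derivative (\<lambda>h. A *v h)) (at z))"

definition locally_uniform_limit ::
  "'a::topological_space set \<Rightarrow> (nat \<Rightarrow> 'a \<Rightarrow> 'b::metric_space) \<Rightarrow> ('a \<Rightarrow> 'b) \<Rightarrow> bool" where
  "locally_uniform_limit S f g \<longleftrightarrow>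
     (\<forall>x\<in>S. \<exists>U. open U \<and> x \<in> U \<and> U \<subseteq> S \<and> uniform_limit U f g sequentially)"

end

theory Submission imports Defs "HOL-Complex_Analysis.Complex_Analysis" begin

lemma unif_on_compact:
  assumes "locally_uniform_limit S f g" "compact K" "K \<subseteq> S"
  shows "uniform_limit K f g sequentially"
proof -
  have "\<forall>x\<in>K. \<exists>U. open U \<and> x \<in> U \<and> U \<subseteq> S \<and> uniform_limit U f g sequentially"
    using assms(1,3) unfolding locally_uniform_limit_def by blast
  then obtain U where U: "\<And>x. x \<in> K \<Longrightarrow> open (U x) \<and> x \<in> U x \<and> uniform_limit (U x) f g sequentially"
    by metis
  have "K \<subseteq> (\<Union>x\<in>K. U x)" using U by blast
  then obtain F where F: "F \<subseteq> K" "finite F" "K \<subseteq> (\<Union>x\<in>F. U x)"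
    using compactE_image[OF assms(2), of K U] U by metis
  have "uniform_limit (\<Union>(U ` F)) f g sequentially"
    by (rule uniform_limit_on_Union) (use F U in auto)
  then show ?thesis using F(3) uniform_limit_on_subset by blast
qed

lemma norm_smult_vec:
  fixes v :: "complex ^ 'n"
  shows "norm (s *s v) = norm s * norm v"
  unfolding norm_vec_def by (simp add: L2_set_right_distrib norm_mult)

lemma bl_smult_vec:
  fixes v :: "complex ^ 'n"
  shows "bounded_linear (\<lambda>s::complex. s *s v)"
proof (rule bounded_linear_intro[where K="norm v"])
  show "\<And>x y. (x + y) *s v = x *s v + y *s v" by (simp add: vec_eq_iff algebra_simps)
  show "\<And>r x. (r *\<^sub>R x) *s v = r *\<^sub>R (x *s v)" by (simp add: vec_eq_iff)
  show "\<And>x. norm (x *s v) \<le> norm x * norm v" by (simp add: norm_smult_vec)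
qed

lemma funpow_deriv:
  assumes "(f has_derivative L) (at P)" "f P = P"
  shows "((f ^^ i) has_derivative (L ^^ i)) (at P) \<and> (f ^^ i) P = P"
proof (induction i)
  case 0 then show ?case by (simp add: has_derivative_ident id_def)
next
  case (Suc i)
  then have "((f \<circ> (f ^^ i)) has_derivative (L \<circ> (L ^^ i))) (at P)"
    using diff_chain_at[of "f ^^ i" "L ^^ i" P f L] assms by simp
  then show ?case using Suc assms by (simp add: o_def)
qed

lemma bl_funpow:
  fixes L :: "'a::real_normed_vector \<Rightarrow> 'a"
  assumes "bounded_linear L"
  shows "bounded_linear (L ^^ i)"
proof (induction i)
  case 0
  show ?case unfolding funpow_0 id_def by (rule bounded_linear_ident)
next
  case (Suc i) then show ?case using bounded_linear_compose[OF assms] by (simp add: o_def)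
qed

lemma finite_order_near_id:
  fixes L :: "'a::real_normed_vector \<Rightarrow> 'a"
  assumes bl: "bounded_linear L" and D: "D > 0" and LD: "\<And>x. (L ^^ D) x = x"
    and c: "0 \<le> c" "real D * c * 2 ^ D \<le> 1/2"
    and near: "\<And>v. norm (L v - v) \<le> c * norm v"
  shows "L v = v"
proof -
  define w where "w = L v - v"
  have blp: "\<And>i. bounded_linear (L ^^ i)" using bl_funpow[OF bl] .
  have c1: "c \<le> 1"
  proof -
    have "1 \<le> real D" using D by simp
    moreover have "1 \<le> (2::real)^D" by simp
    ultimately have "real D * 2^D \<ge> 1" using mult_mono[of 1 "real D" 1 "(2::real)^D"] by simp
    then have "c * 1 \<le> c * (real D * 2^D)" using c(1) by (intro mult_left_mono) auto
    with c(2) show ?thesis by (simp add: algebra_simps)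
  qed
  have nb: "norm ((L ^^ i) x) \<le> 2 ^ i * norm x" for i x
  proof (induction i)
    case 0 then show ?case by simp
  next
    case (Suc i)
    have "norm ((L ^^ Suc i) x) \<le> norm ((L ^^ i) x) + c * norm ((L ^^ i) x)"
      using near[of "(L ^^ i) x"] norm_triangle_ineq2[of "L ((L ^^ i) x)" "(L ^^ i) x"] by simp
    also have "\<dots> \<le> 2 * norm ((L ^^ i) x)" using c1 mult_right_mono[OF c1 norm_ge_zero[of "(L ^^ i) x"]] by simp
    also have "\<dots> \<le> 2 * (2 ^ i * norm x)" using Suc by simp
    finally show ?case by simp
  qed
  have db: "norm ((L ^^ i) x - x) \<le> real i * c * 2 ^ i * norm x" for i x
  proof (induction i)
    case 0 then show ?case by simp
  next
    case (Suc i)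
    have "norm ((L ^^ Suc i) x - x) \<le> norm (L ((L ^^ i) x) - (L ^^ i) x) + norm ((L ^^ i) x - x)"
      using norm_triangle_ineq[of "L ((L ^^ i) x) - (L ^^ i) x" "(L ^^ i) x - x"] by simp
    also have "\<dots> \<le> c * (2 ^ i * norm x) + real i * c * 2 ^ i * norm x"
      using near[of "(L ^^ i) x"] nb[of i x] Suc c(1)
      by (meson add_mono mult_left_mono order_trans)
    also have "\<dots> = real (Suc i) * c * 2 ^ i * norm x" by (simp add: algebra_simps)
    also have "\<dots> \<le> real (Suc i) * c * 2 ^ Suc i * norm x"
      using c(1) by (intro mult_right_mono mult_left_mono) auto
    finally show ?case .
  qed
  have tel: "(\<Sum>i<D. (L ^^ i) w) = (L ^^ D) v - v"
  proof -
    have "(L ^^ i) w = (L ^^ Suc i) v - (L ^^ i) v" for i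
      unfolding w_def using linear_diff[OF bounded_linear.linear[OF blp[of i]]] by (simp add: funpow_swap1)
    then have "(\<Sum>i<D. (L ^^ i) w) = (\<Sum>i<D. (L ^^ Suc i) v - (L ^^ i) v)" by simp
    also have "\<dots> = (L ^^ D) v - (L ^^ 0) v" by (rule sum_lessThan_telescope)
    finally show ?thesis by simp
  qed
  then have "(\<Sum>i<D. (L ^^ i) w) = 0" using LD by simp
  moreover have "(\<Sum>i<D. w - (L ^^ i) w) = (\<Sum>i<D. w) - (\<Sum>i<D. (L ^^ i) w)"
    by (rule sum_subtractf)
  moreover have "(\<Sum>i<D. w) = real D *\<^sub>R w" by (simp add: sum_constant_scaleR)
  ultimately have "real D *\<^sub>R w = (\<Sum>i<D. w - (L ^^ i) w)" by simp
  then have "real D * norm w \<le> (\<Sum>i<D. norm (w - (L ^^ i) w))"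
    by (metis norm_scaleR abs_of_nat norm_sum)
  also have "\<dots> \<le> (\<Sum>i<D. norm w / 2)"
  proof (rule sum_mono)
    fix i assume "i \<in> {..<D}"
    then have "real i * c * 2 ^ i \<le> real D * c * 2 ^ D"
      using c(1) by (intro mult_mono) (auto intro: power_increasing)
    then have "real i * c * 2 ^ i * norm w \<le> 1/2 * norm w" using c(2)
      by (intro mult_right_mono) auto
    then show "norm (w - (L ^^ i) w) \<le> norm w / 2"
      using db[of i w] by (simp add: norm_minus_commute)
  qed
  also have "\<dots> = real D * norm w / 2" by simp
  finally have "norm w = 0" using D by simp
  then show ?thesis by (simp add: w_def)
qed


lemma line_deriv:
  fixes f :: "complex ^ 'n \<Rightarrow> complex ^ 'n" and B :: "complex ^ 'n ^ 'n"
  assumes hB: "(f has_derivative (\<lambda>h. B *v h)) (at (P + t *s v))"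
  shows "((\<lambda>t. (f (P + t *s v) - (P + t *s v)) $ k) has_field_derivative ((B *v v) $ k - v $ k)) (at t)"
proof -
  have hh: "((\<lambda>t. P + t *s v) has_derivative (\<lambda>s. s *s v)) (at t)"
    using has_derivative_add[OF has_derivative_const bounded_linear_imp_has_derivative[OF bl_smult_vec[of v]], of P]
    by simp
  have d1: "((\<lambda>t. f (P + t *s v)) has_derivative (\<lambda>s. B *v (s *s v))) (at t)"
    using diff_chain_at[OF hh hB] by (simp add: o_def)
  have d2: "((\<lambda>t. f (P + t *s v) - (P + t *s v)) has_derivative (\<lambda>s. B *v (s *s v) - s *s v)) (at t)"
    by (rule has_derivative_diff[OF d1 hh])
  have d3: "((\<lambda>t. (f (P + t *s v) - (P + t *s v)) $ k) has_derivative (\<lambda>s. (B *v (s *s v) - s *s v) $ k)) (at t)"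
    by (rule bounded_linear.has_derivative[OF bounded_linear_vec_nth d2])
  have eq: "(\<lambda>s. (B *v (s *s v) - s *s v) $ k) = (\<lambda>s. ((B *v v) $ k - v $ k) * s)"
    by (rule ext) (simp add: vector_scalar_commute algebra_simps)
  show ?thesis using d3 unfolding eq has_field_derivative_def .
qed

lemma cauchy_est:
  fixes f :: "complex ^ 'n \<Rightarrow> complex ^ 'n" and A :: "complex ^ 'n ^ 'n"
  assumes hol: "\<forall>z\<in>S. \<exists>A :: complex ^ 'n ^ 'n. (f has_derivative (\<lambda>h. A *v h)) (at z)"
    and sub: "cball P \<delta> \<subseteq> S" and dpos: "\<delta> > 0"
    and bnd: "\<And>x. x \<in> cball P \<delta> \<Longrightarrow> norm (f x - x) \<le> \<epsilon>"
    and dP: "(f has_derivative (\<lambda>h. A *v h)) (at P)"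
  shows "norm (A *v v - v) \<le> real CARD('n) * (\<epsilon> / \<delta>) * norm v"
proof (cases "v = 0")
  case True then show ?thesis by simp
next
  case False
  define r where "r = \<delta> / norm v"
  have rpos: "r > 0" using False dpos by (simp add: r_def)
  have inball: "P + t *s v \<in> cball P \<delta>" if "t \<in> cball 0 r" for t
  proof -
    have "norm t \<le> r" using that by simp
    then have "norm t * norm v \<le> r * norm v" by (simp add: mult_right_mono)
    also have "\<dots> = \<delta>" using False by (simp add: r_def)
    finally show ?thesis by (simp add: dist_norm norm_smult_vec)
  qed
  have comp: "norm ((A *v v - v) $ k) \<le> \<epsilon> / r" for k
  proof -
    define g where "g t = (f (P + t *s v) - (P + t *s v)) $ k" for t
    have gd: "g field_differentiable (at t)" if tin: "t \<in> cball 0 r" for t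
    proof -
      obtain B :: "complex ^ 'n ^ 'n" where "(f has_derivative (\<lambda>h. B *v h)) (at (P + t *s v))"
        using hol sub inball[OF tin] by (meson subsetD)
      from line_deriv[OF this, of k] show ?thesis
        unfolding g_def field_differentiable_def by blast
    qed
    have holg: "g holomorphic_on ball 0 r"
      using gd by (simp add: holomorphic_on_def field_differentiable_at_within)
    have contg: "continuous_on (cball 0 r) g"
      using gd by (intro continuous_at_imp_continuous_on) (simp add: field_differentiable_imp_continuous_at)
    have nof: "norm (g x) \<le> \<epsilon>" if "norm (0 - x) = r" for x
    proof -
      have "x \<in> cball 0 r" using that by (simp add: dist_norm)
      then have "norm (f (P + x *s v) - (P + x *s v)) \<le> \<epsilon>" using bnd inball by presburger
      moreover have "norm ((f (P + x *s v) - (P + x *s v)) $ k) \<le> norm (f (P + x *s v) - (P + x *s v))"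
        by (rule Finite_Cartesian_Product.norm_nth_le)
      ultimately show ?thesis unfolding g_def by linarith
    qed
    have "norm ((deriv ^^ 1) g 0) \<le> fact 1 * \<epsilon> / r ^ 1"
      by (rule Cauchy_inequality[OF holg contg rpos nof])
    moreover have "deriv g 0 = (A *v v) $ k - v $ k"
      using line_deriv[of f A P 0 v k] dP unfolding g_def by (simp add: DERIV_imp_deriv)
    ultimately show ?thesis by simp
  qed
  have "norm (A *v v - v) \<le> (\<Sum>k\<in>UNIV. norm ((A *v v - v) $ k))"
    unfolding norm_vec_def by (rule L2_set_le_sum) simp
  also have "\<dots> \<le> (\<Sum>k\<in>(UNIV::'n set). \<epsilon> / r)" by (rule sum_mono) (rule comp)
  also have "\<dots> = real CARD('n) * (\<epsilon> / \<delta>) * norm v"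
    using False by (simp add: r_def)
  finally show ?thesis .
qed

theorem lemma3p10:
  fixes \<Omega> \<Omega>' :: "(complex ^ 'n) set"
    and f :: "nat \<Rightarrow> complex ^ 'n \<Rightarrow> complex ^ 'n"
    and B :: "nat \<Rightarrow> (complex ^ 'n) set"
    and D :: nat
  assumes "open \<Omega>" and "connected \<Omega>"
    and "\<And>m. holomorphic_on_n (f m) \<Omega>"
    and "locally_uniform_limit \<Omega> f id"
    and "D > 0"
    and "open \<Omega>'" and "\<Omega>' \<noteq> {}" and "\<Omega>' \<subseteq> \<Omega>"
    and "compact (closure \<Omega>')" and "closure \<Omega>' \<subseteq> \<Omega>"
    and "\<And>m i. 1 \<le> i \<Longrightarrow> i \<le> D \<Longrightarrow> (f m ^^ i) ` closure \<Omega>' \<subseteq> \<Omega>"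
    and "\<And>m x. x \<in> \<Omega>' \<Longrightarrow> (f m ^^ D) x = x"
    and "\<exists>M. \<forall>m\<ge>M. B m \<noteq> {} \<and> compact (B m) \<and> convex (B m) \<and> B m \<subseteq> \<Omega>'
                   \<and> f m ` B m = B m"
  shows "\<exists>M. \<forall>m\<ge>M. (\<exists>P\<in>B m. f m P = P) \<and>
           (\<forall>P\<in>B m. f m P = P \<longrightarrow> (f m has_derivative (\<lambda>h. h)) (at P))"
proof -
  define K where "K = closure \<Omega>'"
  have cK: "compact K" and KO: "K \<subseteq> \<Omega>" using assms(9,10) by (auto simp: K_def)
  obtain \<delta> where dpos: "\<delta> > 0" and dsub: "(\<Union>x\<in>K. cball x \<delta>) \<subseteq> \<Omega>"
    using compact_subset_open_imp_cball_epsilon_subset[OF cK assms(1) KO] by blast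
  define K2 where "K2 = {x + y | x y. x \<in> K \<and> y \<in> cball 0 \<delta>}"
  have cK2: "compact K2" unfolding K2_def by (rule compact_sums[OF cK compact_cball])
  have K2sub: "K2 \<subseteq> \<Omega>"
  proof
    fix z assume "z \<in> K2"
    then obtain x y where "z = x + y" "x \<in> K" "y \<in> cball 0 \<delta>" unfolding K2_def by blast
    then have "z \<in> cball x \<delta>" by (simp add: dist_norm)
    with \<open>x \<in> K\<close> dsub show "z \<in> \<Omega>" by blast
  qed
  have cbK2: "cball P \<delta> \<subseteq> K2" if "P \<in> K" for P
  proof
    fix z assume "z \<in> cball P \<delta>"
    then have "z - P \<in> cball 0 \<delta>" by (simp add: dist_norm norm_minus_commute)
    moreover have "z = P + (z - P)" by simp
    ultimately show "z \<in> K2" unfolding K2_def using that by blast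
  qed
  have ul: "uniform_limit K2 f id sequentially"
    by (rule unif_on_compact[OF assms(4) cK2 K2sub])
  define c where "c = 1 / (2 * real D * 2 ^ D)"
  define \<epsilon> where "\<epsilon> = c * \<delta> / real CARD('n)"
  have cpos: "c > 0" using assms(5) by (simp add: c_def)
  have card: "real CARD('n) > 0" by simp
  have epos: "\<epsilon> > 0" using cpos dpos card by (simp add: \<epsilon>_def)
  have ceq: "real CARD('n) * (\<epsilon> / \<delta>) = c" using dpos card by (simp add: \<epsilon>_def)
  have cD: "real D * c * 2 ^ D \<le> 1/2" using assms(5) by (simp add: c_def)
  from ul epos have "\<forall>\<^sub>F m in sequentially. \<forall>x\<in>K2. dist (f m x) (id x) < \<epsilon>"
    unfolding uniform_limit_iff by blast
  then obtain M1 where M1: "\<And>m x. m \<ge> M1 \<Longrightarrow> x \<in> K2 \<Longrightarrow> dist (f m x) x < \<epsilon>"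
    unfolding eventually_sequentially by auto
  obtain M2 where M2: "\<And>m. m \<ge> M2 \<Longrightarrow> B m \<noteq> {} \<and> compact (B m) \<and> convex (B m) \<and> B m \<subseteq> \<Omega>'
                   \<and> f m ` B m = B m" using assms(13) by blast
  have hol: "\<And>m. \<forall>z\<in>\<Omega>. \<exists>A :: complex ^ 'n ^ 'n. (f m has_derivative (\<lambda>h. A *v h)) (at z)"
    using assms(3) unfolding holomorphic_on_n_def by blast
  show ?thesis
  proof (intro exI[of _ "max M1 M2"] allI impI conjI)
    fix m assume m: "max M1 M2 \<le> m"
    then have Bm: "B m \<noteq> {}" "compact (B m)" "convex (B m)" "B m \<subseteq> \<Omega>'" "f m ` B m = B m"
      using M2 by auto
    have BO: "B m \<subseteq> \<Omega>" using Bm(4) assms(8) by blast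
    have cont: "continuous_on (B m) (f m)"
    proof (rule continuous_at_imp_continuous_on, rule ballI)
      fix z assume "z \<in> B m"
      then obtain A :: "complex ^ 'n ^ 'n" where "(f m has_derivative (\<lambda>h. A *v h)) (at z)"
        using hol BO by blast
      then show "isCont (f m) z" by (rule has_derivative_continuous)
    qed
    have "f m \<in> B m \<rightarrow> B m" using Bm(5) by blast
    then obtain P where "P \<in> B m" "f m P = P" using brouwer[OF Bm(2,3,1) cont] by blast
    then show "\<exists>P\<in>B m. f m P = P" by blast
  next
    fix m assume m: "max M1 M2 \<le> m"
    then have Bm: "B m \<noteq> {}" "compact (B m)" "convex (B m)" "B m \<subseteq> \<Omega>'" "f m ` B m = B m"
      using M2 by auto
    show "\<forall>P\<in>B m. f m P = P \<longrightarrow> (f m has_derivative (\<lambda>h. h)) (at P)"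
    proof (intro ballI impI)
      fix P assume PB: "P \<in> B m" and fixP: "f m P = P"
      have PO': "P \<in> \<Omega>'" using PB Bm(4) by blast
      have PK: "P \<in> K" using PO' closure_subset unfolding K_def by blast
      have PO: "P \<in> \<Omega>" using PO' assms(8) by blast
      obtain A :: "complex ^ 'n ^ 'n" where dA: "(f m has_derivative (\<lambda>h. A *v h)) (at P)"
        using hol PO by blast
      define L where "L = (\<lambda>h. A *v h)"
      have bl: "bounded_linear L" using has_derivative_bounded_linear[OF dA] by (simp add: L_def)
      have d1: "((f m ^^ D) has_derivative (L ^^ D)) (at P)"
        using funpow_deriv[OF dA[folded L_def] fixP] by blast
      have d2: "((f m ^^ D) has_derivative (\<lambda>h. h)) (at P)"
        by (rule has_derivative_transform_within_open[OF has_derivative_ident assms(6) PO'])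
           (simp add: assms(12))
      have LD: "L ^^ D = (\<lambda>h. h)" by (rule has_derivative_unique[OF d1 d2])
      have near: "norm (L v - v) \<le> c * norm v" for v
      proof -
        have "norm (A *v v - v) \<le> real CARD('n) * (\<epsilon> / \<delta>) * norm v"
        proof (rule cauchy_est[OF hol cbK2[OF PK, THEN order_trans, OF K2sub] dpos _ dA])
          fix x assume "x \<in> cball P \<delta>"
          then have "x \<in> K2" using cbK2[OF PK] by blast
          then have "dist (f m x) x < \<epsilon>" using M1 m by auto
          then show "norm (f m x - x) \<le> \<epsilon>" by (simp add: dist_norm)
        qed
        then show ?thesis unfolding ceq L_def .
      qed
      have Lid: "L v = v" for v
        by (rule finite_order_near_id[OF bl assms(5) _ _ cD near]) (use LD cpos in auto)
      have "L = (\<lambda>h. h)" using Lid by (simp add: fun_eq_iff)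
      then show "(f m has_derivative (\<lambda>h. h)) (at P)" using dA by (simp add: L_def)
    qed
  qed
qed

end
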